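(* Consider LPC-SVRG (defined in the context) and fix an epoch $s$ and inner index $t$. Let $d_\lambda\ge 0$ be a number such that almost surely, for every worker $i$, the number of coordinates of $u_t^i$ lying outside $[-2^{b-1}\delta,(2^{b-1}-1)\delta]$, where $\delta$ is the scale factor used to quantize $u_t^i$ (i.e. $\delta_t^i$ in scheme (a), $\delta_t$ in schemes (b),(c)), is at most $d_\lambda$. Then: (i) under communication scheme (a) or (b), $$\mathbf{E}\|v_t^{s+1}-\nabla f(x_t^{s+1})\|^2\le 2L^2\Big[\frac{d\lambda^2}{4(2^{b-1}-1)^2}+d_\lambda(1-\lambda)^2+\frac{1}{NB}\Big]\mathbf{E}\|x_t^{s+1}-\tilde x^s\|^2;$$ (ii) under communication scheme (c), $$\mathbf{E}\|v_t^{s+1}-\nabla f(x_t^{s+1})\|^2\le 2L^2\Big[\frac{3d\lambda^2}{8(2^{b-1}-1)^2}+d_\lambda(1-\lambda)^2+\frac{1}{NB}\Big]\mathbf{E}\|x_t^{s+1}-\tilde x^s\|^2.$$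
   Context: Problem setting: $f_1,\dots,f_n:\mathbb{R}^d\to\mathbb{R}$ are differentiable with $\|\nabla f_i(x)-\nabla f_i(y)\|\le L\|x-y\|$; $f=\frac1n\sum_i f_i$; $h:\mathbb{R}^d\to\mathbb{R}\cup\{+\infty\}$ is proper, convex and lower semicontinuous; $P=f+h$; $\mathrm{prox}_{\eta h}(x)=\arg\min_y\{h(y)+\frac{1}{2\eta}\|y-x\|^2\}$. Quantization: for an integer $b\ge2$ and $\delta>0$, $\mathrm{dom}(\delta,b)=\{k\delta:k\in\mathbb{Z},-2^{b-1}\le k\le 2^{b-1}-1\}$; the scalar quantizer $Q_{(\delta,b)}(x)$, for $x\in[-2^{b-1}\delta,(2^{b-1}-1)\delta]$ with $z$ the largest grid point $\le x$, equals $z$ with probability $\frac{z+\delta-x}{\delta}$ and $z+\delta$ otherwise; for $x$ outside this interval it equals the nearest grid point. On vectors it acts coordinatewise with independent randomness. If $\delta=0$ (which only occurs when the vector to be quantized is $0$) we set the output to $0$. LPC-SVRG with $N$ workers, parameters $S,m,B\in\mathbb{N}$, $\eta>0$, $\lambda\in(0,1]$, $b\ge 2$, starting point $\tilde x^0=x^0$: for $s=0,\dots,S-1$, set $x_0^{s+1}=\tilde x^s$ and compute $\nabla f(\tilde x^s)$ exactly; for $t=0,\dots,m-1$: each worker $i\in\{1,\dots,N\}$ draws $B$ indices independently and uniformly from $\{1,\dots,n\}$ (with replacement; independent across workers and iterations), forming the multiset $I_t^i$, and computes $u_t^i=\frac1B\sum_{a\in I_t^i}[\nabla f_a(x_t^{s+1})-\nabla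 f_a(\tilde x^s)]$; let $\delta_t^i=\frac{\lambda\|u_t^i\|_\infty}{2^{b-1}-1}$. Then $\tilde u_t$ is formed by one of three schemes: (a) $\tilde u_t=\frac1N\sum_i Q_{(\delta_t^i,b)}(u_t^i)$; (b) with $\delta_t=\max_i\delta_t^i$, $\tilde u_t=\frac1N\sum_i Q_{(\delta_t,b)}(u_t^i)$; (c) with $\delta_t=\max_i\delta_t^i$ and $\tilde u_t^i=Q_{(\delta_t,b)}(u_t^i)$, $\tilde u_t=Q_{(\delta_t,b)}\big(\frac1N\sum_i\tilde u_t^i\big)$ (with fresh independent rounding). All quantization roundings are independent of each other given the sampled indices. Then $v_t^{s+1}=\tilde u_t+\nabla f(\tilde x^s)$ and $x_{t+1}^{s+1}=\mathrm{prox}_{\eta h}(x_t^{s+1}-\eta v_t^{s+1})$. After the inner loop, $\tilde x^{s+1}=x_m^{s+1}$. The output $x_{out}$ is chosen uniformly at random from $\{x_t^{s+1}: 0\le t\le m-1,\ 0\le s\le S-1\}$. *)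

theory Defs
  imports "HOL-Analysis.Analysis" "HOL-Probability.Probability"
begin

datatype scheme = SchA | SchB | SchC

definition proper_fun :: "('a \<Rightarrow> ereal) \<Rightarrow> bool" where
  "proper_fun h \<longleftrightarrow> (\<forall>x. h x \<noteq> -\<infinity>) \<and> (\<exists>x. h x \<noteq> \<infinity>)"

definition convex_ereal :: "('a::real_vector \<Rightarrow> ereal) \<Rightarrow> bool" where
  "convex_ereal h \<longleftrightarrow> (\<forall>x y u. 0 < u \<and> u < 1 \<longrightarrow>
      h ((1 - u) *\<^sub>R x + u *\<^sub>R y) \<le> ereal (1 - u) * h x + ereal u * h y)"

definition lsc_fun :: "('a::topological_space \<Rightarrow> ereal) \<Rightarrow> bool" where
  "lsc_fun h \<longleftrightarrow> (\<forall>x. h x \<le> Liminf (at x) h)"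

definition prox :: "('a::real_normed_vector \<Rightarrow> ereal) \<Rightarrow> real \<Rightarrow> 'a \<Rightarrow> 'a" where
  "prox h eta y = (SOME z. \<forall>w. h z + ereal ((norm (z - y))\<^sup>2 / (2 * eta))
                              \<le> h w + ereal ((norm (w - y))\<^sup>2 / (2 * eta)))"

definition Qs :: "real \<Rightarrow> nat \<Rightarrow> real \<Rightarrow> real pmf" where
  "Qs \<delta> b x =
     (if \<delta> = 0 then return_pmf 0
      else if x < - ((2::real) ^ (b - 1)) * \<delta> then return_pmf (- ((2::real) ^ (b - 1)) * \<delta>)
      else if x > ((2::real) ^ (b - 1) - 1) * \<delta> then return_pmf (((2::real) ^ (b - 1) - 1) * \<delta>)
      else map_pmf (\<lambda>c. if c then \<delta> * of_int \<lfloor>x / \<delta>\<rfloor> + \<delta> else \<delta> * of_int \<lfloor>x / \<delta>\<rfloor>)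
             (bernoulli_pmf ((x - \<delta> * of_int \<lfloor>x / \<delta>\<rfloor>) / \<delta>)))"

definition Qv :: "real \<Rightarrow> nat \<Rightarrow> real ^ 'd \<Rightarrow> (real ^ 'd) pmf" where
  "Qv \<delta> b u = map_pmf (\<lambda>g. \<chi> j. g j) (Pi_pmf UNIV 0 (\<lambda>j. Qs \<delta> b (u $ j)))"

definition inf_norm :: "real ^ 'd \<Rightarrow> real" where
  "inf_norm u = Max (range (\<lambda>j. \<bar>u $ j\<bar>))"

definition gradF :: "(nat \<Rightarrow> real ^ 'd \<Rightarrow> real ^ 'd) \<Rightarrow> nat \<Rightarrow> real ^ 'd \<Rightarrow> real ^ 'd" where
  "gradF G n x = (1 / real n) *\<^sub>R (\<Sum>i<n. G i x)"

definition sample_pmf :: "nat \<Rightarrow> nat \<Rightarrow> (nat \<Rightarrow> nat) pmf" where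
  "sample_pmf n B = Pi_pmf {..<B} 0 (\<lambda>_. pmf_of_set {..<n})"

definition worker_u :: "(nat \<Rightarrow> real ^ 'd \<Rightarrow> real ^ 'd) \<Rightarrow> nat \<Rightarrow> (nat \<Rightarrow> nat)
    \<Rightarrow> real ^ 'd \<Rightarrow> real ^ 'd \<Rightarrow> real ^ 'd" where
  "worker_u G B I x xt = (1 / real B) *\<^sub>R (\<Sum>a<B. G (I a) x - G (I a) xt)"

definition delta_i :: "real \<Rightarrow> nat \<Rightarrow> real ^ 'd \<Rightarrow> real" where
  "delta_i lam b u = lam * inf_norm u / ((2::real) ^ (b - 1) - 1)"

definition delta_max :: "real \<Rightarrow> nat \<Rightarrow> nat \<Rightarrow> (nat \<Rightarrow> real ^ 'd) \<Rightarrow> real" where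
  "delta_max lam b N us = Max ((\<lambda>i. delta_i lam b (us i)) ` {..<N})"

definition scale :: "scheme \<Rightarrow> real \<Rightarrow> nat \<Rightarrow> nat \<Rightarrow> (nat \<Rightarrow> real ^ 'd) \<Rightarrow> nat \<Rightarrow> real" where
  "scale sch lam b N us i = (if sch = SchA then delta_i lam b (us i) else delta_max lam b N us)"

definition avg :: "nat \<Rightarrow> (nat \<Rightarrow> real ^ 'd) \<Rightarrow> real ^ 'd" where
  "avg N qs = (1 / real N) *\<^sub>R (\<Sum>i<N. qs i)"

(* One inner step at current iterate x with snapshot xt.
   Returns (u^1..u^N (as function on {..<N}, 0 elsewhere), v_t^{s+1}). *)
definition step :: "(nat \<Rightarrow> real ^ 'd \<Rightarrow> real ^ 'd) \<Rightarrow> nat \<Rightarrow> nat \<Rightarrow> nat \<Rightarrow> nat \<Rightarrow> real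
    \<Rightarrow> scheme \<Rightarrow> real ^ 'd \<Rightarrow> real ^ 'd \<Rightarrow> ((nat \<Rightarrow> real ^ 'd) \<times> (real ^ 'd)) pmf" where
  "step G n N B b lam sch x xt =
     bind_pmf (Pi_pmf {..<N} (\<lambda>_. 0) (\<lambda>_. sample_pmf n B)) (\<lambda>Is.
       let us = (\<lambda>i. if i < N then worker_u G B (Is i) x xt else 0) in
       bind_pmf (Pi_pmf {..<N} 0 (\<lambda>i. Qv (scale sch lam b N us i) b (us i))) (\<lambda>qs.
         bind_pmf (if sch = SchC then Qv (delta_max lam b N us) b (avg N qs)
                   else return_pmf (avg N qs)) (\<lambda>ut.
           return_pmf (us, ut + gradF G n xt))))"

(* distribution of x_t^{s+1} given snapshot xt = tilde x^s *)
primrec inner :: "(nat \<Rightarrow> real ^ 'd \<Rightarrow> real ^ 'd) \<Rightarrow> nat \<Rightarrow> nat \<Rightarrow> nat \<Rightarrow> nat \<Rightarrow> real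
    \<Rightarrow> scheme \<Rightarrow> (real ^ 'd \<Rightarrow> ereal) \<Rightarrow> real \<Rightarrow> real ^ 'd \<Rightarrow> nat \<Rightarrow> (real ^ 'd) pmf" where
  "inner G n N B b lam sch h eta xt 0 = return_pmf xt"
| "inner G n N B b lam sch h eta xt (Suc t) =
     bind_pmf (inner G n N B b lam sch h eta xt t) (\<lambda>x.
       map_pmf (\<lambda>(us, v). prox h eta (x - eta *\<^sub>R v)) (step G n N B b lam sch x xt))"

(* distribution of the snapshot tilde x^s *)
primrec snap :: "(nat \<Rightarrow> real ^ 'd \<Rightarrow> real ^ 'd) \<Rightarrow> nat \<Rightarrow> nat \<Rightarrow> nat \<Rightarrow> nat \<Rightarrow> real
    \<Rightarrow> scheme \<Rightarrow> (real ^ 'd \<Rightarrow> ereal) \<Rightarrow> real \<Rightarrow> nat \<Rightarrow> real ^ 'd \<Rightarrow> nat \<Rightarrow> (real ^ 'd) pmf" where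
  "snap G n N B b lam sch h eta m x0 0 = return_pmf x0"
| "snap G n N B b lam sch h eta m x0 (Suc s) =
     bind_pmf (snap G n N B b lam sch h eta m x0 s) (\<lambda>xt. inner G n N B b lam sch h eta xt m)"

(* joint distribution of (tilde x^s, x_t^{s+1}, (u_t^i)_i, v_t^{s+1}) *)
definition joint :: "(nat \<Rightarrow> real ^ 'd \<Rightarrow> real ^ 'd) \<Rightarrow> nat \<Rightarrow> nat \<Rightarrow> nat \<Rightarrow> nat \<Rightarrow> real
    \<Rightarrow> scheme \<Rightarrow> (real ^ 'd \<Rightarrow> ereal) \<Rightarrow> real \<Rightarrow> nat \<Rightarrow> real ^ 'd \<Rightarrow> nat \<Rightarrow> nat
    \<Rightarrow> ((real ^ 'd) \<times> (real ^ 'd) \<times> (nat \<Rightarrow> real ^ 'd) \<times> (real ^ 'd)) pmf" where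
  "joint G n N B b lam sch h eta m x0 s t =
     bind_pmf (snap G n N B b lam sch h eta m x0 s) (\<lambda>xt.
       bind_pmf (inner G n N B b lam sch h eta xt t) (\<lambda>x.
         map_pmf (\<lambda>(us, v). (xt, x, us, v)) (step G n N B b lam sch x xt)))"

definition n_out :: "real \<Rightarrow> nat \<Rightarrow> real ^ 'd \<Rightarrow> nat" where
  "n_out \<delta> b u = card {j. u $ j < - ((2::real) ^ (b - 1)) * \<delta> \<or> u $ j > ((2::real) ^ (b - 1) - 1) * \<delta>}"

end

theory Submission imports Defs begin

lemma E_bind:
  fixes h :: "'b \<Rightarrow> 'c::{banach, second_countable_topology}"
  assumes "finite (set_pmf p)" "\<And>x. x \<in> set_pmf p \<Longrightarrow> finite (set_pmf (f x))"
  shows "measure_pmf.expectation (bind_pmf p f) h = measure_pmf.expectation p (\<lambda>x. measure_pmf.expectation (f x) h)"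
  using assms
  by (subst pmf_expectation_bind[where A="set_pmf p"]) (auto simp: integral_measure_pmf[of "set_pmf p"])

lemma E_swap:
  fixes h :: "'a \<Rightarrow> 'b \<Rightarrow> real"
  assumes "finite (set_pmf p)" "finite (set_pmf q)"
  shows "measure_pmf.expectation p (\<lambda>x. measure_pmf.expectation q (\<lambda>y. h x y))
       = measure_pmf.expectation q (\<lambda>y. measure_pmf.expectation p (\<lambda>x. h x y))"
proof -
  have "measure_pmf.expectation p (\<lambda>x. measure_pmf.expectation q (\<lambda>y. h x y))
     = (\<Sum>x\<in>set_pmf p. pmf p x * (\<Sum>y\<in>set_pmf q. pmf q y * h x y))"
    using assms by (simp add: integral_measure_pmf[of "set_pmf p"] integral_measure_pmf[of "set_pmf q"])
  also have "\<dots> = (\<Sum>y\<in>set_pmf q. pmf q y * (\<Sum>x\<in>set_pmf p. pmf p x * h x y))"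
    by (simp add: sum_distrib_left sum.swap[of _ "set_pmf p"] mult_ac)
  also have "\<dots> = measure_pmf.expectation q (\<lambda>y. measure_pmf.expectation p (\<lambda>x. h x y))"
    using assms by (simp add: integral_measure_pmf[of "set_pmf p"] integral_measure_pmf[of "set_pmf q"])
  finally show ?thesis .
qed

lemma E_marg:
  fixes h :: "'b \<Rightarrow> 'c::{banach, second_countable_topology}"
  assumes "finite A" "i \<in> A"
  shows "measure_pmf.expectation (Pi_pmf A d p) (\<lambda>f. h (f i)) = measure_pmf.expectation (p i) h"
proof -
  have "measure_pmf.expectation (Pi_pmf A d p) (\<lambda>f. h (f i)) =
        measure_pmf.expectation (map_pmf (\<lambda>f. f i) (Pi_pmf A d p)) h" by simp
  also have "map_pmf (\<lambda>f. f i) (Pi_pmf A d p) = p i" using assms by (simp add: Pi_pmf_component)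
  finally show ?thesis .
qed

lemma finite_Pi:
  assumes "finite A" "\<And>i. i \<in> A \<Longrightarrow> finite (set_pmf (p i))"
  shows "finite (set_pmf (Pi_pmf A d p))"
  using assms by (auto simp: set_Pi_pmf intro!: finite_PiE_dflt)

lemma int_fin: "finite (set_pmf p) \<Longrightarrow> integrable (measure_pmf p) (f :: _ \<Rightarrow> real)"
  by (rule integrable_measure_pmf_finite)

lemma norm_add_sq: "(norm (a + b :: 'b::real_inner))\<^sup>2 = (norm a)\<^sup>2 + 2 * (a \<bullet> b) + (norm b)\<^sup>2"
  by (simp add: power2_norm_eq_inner inner_add_left inner_add_right inner_commute)

lemma var_sum_Pi:
  fixes F :: "'i \<Rightarrow> 'a \<Rightarrow> 'b::euclidean_space"
  assumes "finite A" "\<forall>i\<in>A. finite (set_pmf (p i))"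
    and "\<forall>i\<in>A. \<forall>c. measure_pmf.expectation (p i) (\<lambda>y. (F i y - \<mu> i) \<bullet> c) = 0"
  shows "measure_pmf.expectation (Pi_pmf A d p) (\<lambda>f. (norm (\<Sum>i\<in>A. F i (f i) - \<mu> i))\<^sup>2)
       = (\<Sum>i\<in>A. measure_pmf.expectation (p i) (\<lambda>y. (norm (F i y - \<mu> i))\<^sup>2))"
  using assms
proof (induction A rule: finite_induct)
  case empty
  then show ?case by simp
next
  case (insert x A)
  let ?P = "Pi_pmf A d p"
  let ?S = "\<lambda>f. (\<Sum>i\<in>A. F i (f i) - \<mu> i)"
  let ?a = "\<lambda>y. F x y - \<mu> x"
  have finP: "finite (set_pmf ?P)" using insert by (intro finite_Pi) auto
  have finx: "finite (set_pmf (p x))" using insert by auto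
  have sumeq: "(\<Sum>i\<in>insert x A. F i ((f(x:=y)) i) - \<mu> i) = ?a y + ?S f" for f y
  proof -
    have "(\<Sum>i\<in>A. F i ((f(x:=y)) i) - \<mu> i) = ?S f"
      using insert by (intro sum.cong) auto
    then show ?thesis using insert by simp
  qed
  have sumeq2: "(\<Sum>i\<in>A. F i (if i = x then y else f i) - \<mu> i) = ?S f" for f y
    using insert by (intro sum.cong) auto
  have "measure_pmf.expectation (Pi_pmf (insert x A) d p) (\<lambda>f. (norm (\<Sum>i\<in>insert x A. F i (f i) - \<mu> i))\<^sup>2)
      = measure_pmf.expectation (p x) (\<lambda>y. measure_pmf.expectation ?P (\<lambda>f. (norm (?a y + ?S f))\<^sup>2))"
    using insert finP finx
    by (simp add: Pi_pmf_insert' E_bind sumeq sumeq2)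
  also have "\<dots> = measure_pmf.expectation (p x) (\<lambda>y. (norm (?a y))\<^sup>2
       + 2 * measure_pmf.expectation ?P (\<lambda>f. ?a y \<bullet> ?S f) + measure_pmf.expectation ?P (\<lambda>f. (norm (?S f))\<^sup>2))"
    using finP by (simp add: norm_add_sq int_fin)
  also have "\<dots> = measure_pmf.expectation (p x) (\<lambda>y. (norm (?a y))\<^sup>2)
       + 2 * measure_pmf.expectation (p x) (\<lambda>y. measure_pmf.expectation ?P (\<lambda>f. ?a y \<bullet> ?S f))
       + measure_pmf.expectation ?P (\<lambda>f. (norm (?S f))\<^sup>2)"
    using finx by (simp add: int_fin)
  also have "measure_pmf.expectation (p x) (\<lambda>y. measure_pmf.expectation ?P (\<lambda>f. ?a y \<bullet> ?S f))
       = measure_pmf.expectation ?P (\<lambda>f. measure_pmf.expectation (p x) (\<lambda>y. ?a y \<bullet> ?S f))"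
    using finx finP by (rule E_swap)
  also have "\<dots> = 0" using insert by simp
  finally show ?case using insert by simp
qed

lemma bern_True: "0 \<le> p \<Longrightarrow> p \<le> 1 \<Longrightarrow> True \<in> set_pmf (bernoulli_pmf p) \<Longrightarrow> 0 < p"
  by (simp add: set_pmf_iff)

definition clipq :: "real \<Rightarrow> nat \<Rightarrow> real \<Rightarrow> real" where
  "clipq \<delta> b x = (if \<delta> = 0 then 0
      else if x < - ((2::real) ^ (b - 1)) * \<delta> then - ((2::real) ^ (b - 1)) * \<delta>
      else if x > ((2::real) ^ (b - 1) - 1) * \<delta> then ((2::real) ^ (b - 1) - 1) * \<delta> else x)"

lemma Qs_fin: "finite (set_pmf (Qs \<delta> b x))"
  unfolding Qs_def by auto

lemma frac_bounds:
  assumes "\<delta> > 0"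
  shows "0 \<le> (x - \<delta> * of_int \<lfloor>x / \<delta>\<rfloor>) / \<delta>" "(x - \<delta> * of_int \<lfloor>x / \<delta>\<rfloor>) / \<delta> < 1"
proof -
  have e: "(x - \<delta> * of_int \<lfloor>x / \<delta>\<rfloor>) / \<delta> = x / \<delta> - of_int \<lfloor>x / \<delta>\<rfloor>"
    using assms by (simp add: field_simps)
  show "0 \<le> (x - \<delta> * of_int \<lfloor>x / \<delta>\<rfloor>) / \<delta>" unfolding e by simp
  show "(x - \<delta> * of_int \<lfloor>x / \<delta>\<rfloor>) / \<delta> < 1" unfolding e by linarith
qed

lemma Qs_E_in:
  assumes "\<delta> > 0" "\<not> x < - ((2::real) ^ (b - 1)) * \<delta>" "\<not> x > ((2::real) ^ (b - 1) - 1) * \<delta>"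
  shows "measure_pmf.expectation (Qs \<delta> b x) h =
     h (\<delta> * of_int \<lfloor>x / \<delta>\<rfloor> + \<delta>) * ((x - \<delta> * of_int \<lfloor>x / \<delta>\<rfloor>) / \<delta>)
     + h (\<delta> * of_int \<lfloor>x / \<delta>\<rfloor>) * (1 - (x - \<delta> * of_int \<lfloor>x / \<delta>\<rfloor>) / \<delta>)"
  using assms frac_bounds[OF assms(1), of x] unfolding Qs_def by simp

lemma Qs_mean:
  assumes "\<delta> \<ge> 0"
  shows "measure_pmf.expectation (Qs \<delta> b x) (\<lambda>z. z) = clipq \<delta> b x"
proof (cases "\<delta> = 0 \<or> x < - ((2::real) ^ (b - 1)) * \<delta> \<or> x > ((2::real) ^ (b - 1) - 1) * \<delta>")
  case True
  then show ?thesis unfolding Qs_def clipq_def by auto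
next
  case False
  then have d: "\<delta> > 0" using assms by auto
  show ?thesis using False d
    by (subst Qs_E_in) (auto simp: clipq_def field_simps)
qed

lemma Qs_var:
  assumes "\<delta> \<ge> 0"
  shows "measure_pmf.expectation (Qs \<delta> b x) (\<lambda>z. (z - clipq \<delta> b x)\<^sup>2) \<le> \<delta>\<^sup>2 / 4"
proof (cases "\<delta> = 0 \<or> x < - ((2::real) ^ (b - 1)) * \<delta> \<or> x > ((2::real) ^ (b - 1) - 1) * \<delta>")
  case True
  then show ?thesis unfolding Qs_def clipq_def by auto
next
  case False
  then have d: "\<delta> > 0" using assms by auto
  define p where "p = (x - \<delta> * of_int \<lfloor>x / \<delta>\<rfloor>) / \<delta>"
  have x: "x = \<delta> * of_int \<lfloor>x / \<delta>\<rfloor> + p * \<delta>" using d by (simp add: p_def field_simps)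
  have c: "clipq \<delta> b x = x" using False by (simp add: clipq_def)
  have "measure_pmf.expectation (Qs \<delta> b x) (\<lambda>z. (z - clipq \<delta> b x)\<^sup>2)
     = (\<delta> * of_int \<lfloor>x / \<delta>\<rfloor> + \<delta> - x)\<^sup>2 * p + (\<delta> * of_int \<lfloor>x / \<delta>\<rfloor> - x)\<^sup>2 * (1 - p)"
    using False d unfolding c p_def by (subst Qs_E_in) auto
  also have "\<dots> = \<delta>\<^sup>2 * (p * (1 - p))"
    by (subst (2 4) x) (simp add: power2_eq_square algebra_simps)
  also have "\<dots> \<le> \<delta>\<^sup>2 * (1/4)"
  proof (rule mult_left_mono)
    have "0 \<le> (p - 1/2)\<^sup>2" by simp
    then show "p * (1 - p) \<le> 1/4" by (simp add: power2_eq_square algebra_simps)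
  qed simp
  finally show ?thesis by simp
qed

lemma Qs_dec:
  assumes "\<delta> \<ge> 0"
  shows "measure_pmf.expectation (Qs \<delta> b x) (\<lambda>z. (z - a)\<^sup>2)
       = measure_pmf.expectation (Qs \<delta> b x) (\<lambda>z. (z - clipq \<delta> b x)\<^sup>2) + (clipq \<delta> b x - a)\<^sup>2"
proof -
  let ?c = "clipq \<delta> b x"
  have "(\<lambda>z. (z - a)\<^sup>2) = (\<lambda>z. (z - ?c)\<^sup>2 + 2 * (?c - a) * z + ((?c - a)\<^sup>2 - 2 * (?c - a) * ?c))"
    by (rule ext) (simp add: power2_eq_square algebra_simps)
  then have "measure_pmf.expectation (Qs \<delta> b x) (\<lambda>z. (z - a)\<^sup>2)
     = measure_pmf.expectation (Qs \<delta> b x) (\<lambda>z. (z - ?c)\<^sup>2) + 2 * (?c - a) * measure_pmf.expectation (Qs \<delta> b x) (\<lambda>z. z)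
       + ((?c - a)\<^sup>2 - 2 * (?c - a) * ?c)"
    by (simp add: int_fin Qs_fin)
  then show ?thesis using Qs_mean[OF assms] by (simp add: algebra_simps)
qed

lemma Qs_set:
  assumes "\<delta> \<ge> 0" "z \<in> set_pmf (Qs \<delta> b x)"
  shows "- ((2::real) ^ (b - 1)) * \<delta> \<le> z \<and> z \<le> ((2::real) ^ (b - 1) - 1) * \<delta> \<and> (\<exists>k::int. z = \<delta> * of_int k)"
proof (cases "\<delta> = 0 \<or> x < - ((2::real) ^ (b - 1)) * \<delta> \<or> x > ((2::real) ^ (b - 1) - 1) * \<delta>")
  case True
  have pw: "(1::real) \<le> 2 ^ (b - 1)" by simp
  have A: "\<exists>k::int. - ((2::real) ^ (b - 1)) * \<delta> = \<delta> * of_int k"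
    by (rule exI[of _ "- (2 ^ (b - 1))"]) simp
  have B: "\<exists>k::int. ((2::real) ^ (b - 1) - 1) * \<delta> = \<delta> * of_int k"
    by (rule exI[of _ "2 ^ (b - 1) - 1"]) simp
  have lohi: "- ((2::real) ^ (b - 1)) * \<delta> \<le> ((2::real) ^ (b - 1) - 1) * \<delta>"
  proof -
    have "- ((2::real) ^ (b - 1)) \<le> (2::real) ^ (b - 1) - 1" using pw by linarith
    from mult_right_mono[OF this assms(1)] show ?thesis .
  qed
  from True assms A B lohi show ?thesis unfolding Qs_def
    by (auto split: if_splits)
next
  case False
  then have d: "\<delta> > 0" using assms by auto
  define fl where "fl = \<lfloor>x / \<delta>\<rfloor>"
  define p where "p = (x - \<delta> * of_int fl) / \<delta>"
  have pb: "0 \<le> p" "p < 1" using frac_bounds[OF d, of x] by (auto simp: p_def fl_def)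
  have xe: "x = \<delta> * of_int fl + p * \<delta>" using d by (simp add: p_def field_simps)
  have z: "z = \<delta> * of_int fl + \<delta> \<and> 0 < p \<or> z = \<delta> * of_int fl"
    using assms(2) False d pb unfolding Qs_def fl_def[symmetric] p_def[symmetric]
    using bern_True[of p] by (auto split: if_splits)
  define KI :: int where "KI = 2 ^ (b - 1) - 1"
  define LI :: int where "LI = - (2 ^ (b - 1))"
  have KIr: "real_of_int KI = (2::real) ^ (b - 1) - 1" by (simp add: KI_def)
  have LIr: "real_of_int LI = - ((2::real) ^ (b - 1))" by (simp add: LI_def)
  have x1: "real_of_int LI \<le> x / \<delta>" using False d unfolding LIr by (simp add: field_simps)
  have x2: "x / \<delta> \<le> real_of_int KI" using False d unfolding KIr by (simp add: field_simps)
  have f1: "LI \<le> fl" unfolding fl_def using x1 by (simp add: le_floor_iff)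
  have f2: "real_of_int fl \<le> x / \<delta>" unfolding fl_def by simp
  have f3: "fl \<le> KI" using f2 x2 by linarith
  have lo: "- ((2::real) ^ (b - 1)) * \<delta> \<le> \<delta> * of_int fl"
    using mult_right_mono[OF iffD2[OF of_int_le_iff f1] less_imp_le[OF d]] unfolding LIr by (simp add: mult.commute)
  have hi: "\<delta> * of_int fl \<le> ((2::real) ^ (b - 1) - 1) * \<delta>"
    using mult_right_mono[OF iffD2[OF of_int_le_iff f3] less_imp_le[OF d]] unfolding KIr by (simp add: mult.commute)
  show ?thesis
  proof (cases "z = \<delta> * of_int fl")
    case True
    then show ?thesis using lo hi by auto
  next
    case False
    with z have zz: "z = \<delta> * of_int (fl + 1)" and pp: "0 < p" by (auto simp: algebra_simps)
    have "real_of_int fl < x / \<delta>" using pp d xe by (simp add: field_simps)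
    then have "real_of_int fl < real_of_int KI" using x2 by linarith
    then have f4: "fl + 1 \<le> KI" by simp
    have "\<delta> * of_int (fl + 1) \<le> ((2::real) ^ (b - 1) - 1) * \<delta>"
      using mult_right_mono[OF iffD2[OF of_int_le_iff f4] less_imp_le[OF d]] unfolding KIr by (simp add: mult.commute)
    moreover have "- ((2::real) ^ (b - 1)) * \<delta> \<le> \<delta> * of_int (fl + 1)"
      using lo d by (simp add: algebra_simps)
    ultimately show ?thesis using zz by blast
  qed
qed

lemma Qs_grid:
  assumes "\<delta> > 0" "- ((2::real) ^ (b - 1)) * \<delta> \<le> \<delta> * of_int k" "\<delta> * of_int k \<le> ((2::real) ^ (b - 1) - 1) * \<delta>"
  shows "measure_pmf.expectation (Qs \<delta> b (\<delta> * of_int k)) (\<lambda>y. (y - \<delta> * of_int k)\<^sup>2) = 0"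
  using assms by (subst Qs_E_in) auto

lemma nsq: "(norm (x::real^'d))\<^sup>2 = (\<Sum>j\<in>UNIV. (x$j)\<^sup>2)"
  by (simp only: power2_norm_eq_inner inner_vec_def) (simp add: power2_eq_square)

lemma inner_cart: "(x::real^'d) \<bullet> c = (\<Sum>j\<in>UNIV. x$j * c$j)"
  by (simp add: inner_vec_def)

lemma Qv_fin: "finite (set_pmf (Qv \<delta> b u))"
  unfolding Qv_def by (auto intro!: finite_Pi Qs_fin)

lemma Qv_set: "q \<in> set_pmf (Qv \<delta> b u) \<Longrightarrow> q$j \<in> set_pmf (Qs \<delta> b (u$j))"
  unfolding Qv_def by (auto simp: set_Pi_pmf PiE_dflt_def)

lemma QvE:
  fixes h :: "'d::finite \<Rightarrow> real \<Rightarrow> real" and u :: "real^'d"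
  shows "measure_pmf.expectation (Qv \<delta> b u) (\<lambda>q. \<Sum>j\<in>UNIV. h j (q$j))
   = (\<Sum>j\<in>UNIV. measure_pmf.expectation (Qs \<delta> b (u$j)) (h j))"
proof -
  have fin: "finite (set_pmf (Pi_pmf UNIV 0 (\<lambda>j. Qs \<delta> b (u $ j))))"
    by (auto intro!: finite_Pi Qs_fin)
  have "measure_pmf.expectation (Qv \<delta> b u) (\<lambda>q. \<Sum>j\<in>UNIV. h j (q$j))
     = measure_pmf.expectation (Pi_pmf UNIV 0 (\<lambda>j. Qs \<delta> b (u $ j))) (\<lambda>g. \<Sum>j\<in>UNIV. h j (g j))"
    unfolding Qv_def integral_map_pmf by simp
  also have "\<dots> = (\<Sum>j\<in>UNIV. measure_pmf.expectation (Pi_pmf UNIV 0 (\<lambda>j. Qs \<delta> b (u $ j))) (\<lambda>g. h j (g j)))"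
    using fin by (simp add: int_fin)
  also have "\<dots> = (\<Sum>j\<in>UNIV. measure_pmf.expectation (Qs \<delta> b (u$j)) (h j))"
    by (intro sum.cong refl) (subst E_marg[where h="h _"]; simp)
  finally show ?thesis .
qed

definition clipv :: "real \<Rightarrow> nat \<Rightarrow> real^'d \<Rightarrow> real^'d" where
  "clipv \<delta> b u = (\<chi> j. clipq \<delta> b (u$j))"

lemma Qv_dec:
  assumes "\<delta> \<ge> 0"
  shows "measure_pmf.expectation (Qv \<delta> b u) (\<lambda>q. (norm (q - a))\<^sup>2)
       = measure_pmf.expectation (Qv \<delta> b u) (\<lambda>q. (norm (q - clipv \<delta> b u))\<^sup>2) + (norm (clipv \<delta> b u - a))\<^sup>2"
proof -
  have "measure_pmf.expectation (Qv \<delta> b u) (\<lambda>q. (norm (q - a))\<^sup>2)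
     = (\<Sum>j\<in>UNIV. measure_pmf.expectation (Qs \<delta> b (u$j)) (\<lambda>z. (z - a$j)\<^sup>2))"
    using QvE[where h="\<lambda>j z. (z - a$j)\<^sup>2"] by (simp add: nsq)
  also have "\<dots> = (\<Sum>j\<in>UNIV. measure_pmf.expectation (Qs \<delta> b (u$j)) (\<lambda>z. (z - clipq \<delta> b (u$j))\<^sup>2))
     + (\<Sum>j\<in>UNIV. (clipq \<delta> b (u$j) - a$j)\<^sup>2)"
    unfolding sum.distrib[symmetric] by (intro sum.cong refl Qs_dec assms)
  also have "\<dots> = measure_pmf.expectation (Qv \<delta> b u) (\<lambda>q. (norm (q - clipv \<delta> b u))\<^sup>2) + (norm (clipv \<delta> b u - a))\<^sup>2"
    using QvE[where h="\<lambda>j z. (z - clipq \<delta> b (u$j))\<^sup>2"] by (simp add: nsq clipv_def)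
  finally show ?thesis .
qed

lemma Qv_var:
  fixes u :: "real^'d"
  assumes "\<delta> \<ge> 0"
  shows "measure_pmf.expectation (Qv \<delta> b u) (\<lambda>q. (norm (q - clipv \<delta> b u))\<^sup>2) \<le> real CARD('d) * (\<delta>\<^sup>2 / 4)"
proof -
  have "measure_pmf.expectation (Qv \<delta> b u) (\<lambda>q. (norm (q - clipv \<delta> b u))\<^sup>2)
     = (\<Sum>j\<in>(UNIV::'d set). measure_pmf.expectation (Qs \<delta> b (u$j)) (\<lambda>z. (z - clipq \<delta> b (u$j))\<^sup>2))"
    using QvE[where h="\<lambda>j z. (z - clipq \<delta> b (u$j))\<^sup>2"] by (simp add: nsq clipv_def)
  also have "\<dots> \<le> (\<Sum>j\<in>(UNIV::'d set). \<delta>\<^sup>2 / 4)"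
    by (intro sum_mono Qs_var assms)
  finally show ?thesis by simp
qed

lemma Qv_mean0:
  assumes "\<delta> \<ge> 0"
  shows "measure_pmf.expectation (Qv \<delta> b u) (\<lambda>q. (q - clipv \<delta> b u) \<bullet> c) = 0"
proof -
  have "measure_pmf.expectation (Qv \<delta> b u) (\<lambda>q. (q - clipv \<delta> b u) \<bullet> c)
     = (\<Sum>j\<in>UNIV. measure_pmf.expectation (Qs \<delta> b (u$j)) (\<lambda>z. (z - clipq \<delta> b (u$j)) * c$j))"
    using QvE[where h="\<lambda>j z. (z - clipq \<delta> b (u$j)) * c$j"] by (simp add: inner_cart clipv_def)
  also have "\<dots> = (\<Sum>j\<in>UNIV. (measure_pmf.expectation (Qs \<delta> b (u$j)) (\<lambda>z. z) - clipq \<delta> b (u$j)) * c$j)"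
    by (intro sum.cong refl) (simp add: int_fin Qs_fin left_diff_distrib)
  also have "\<dots> = 0" by (simp add: Qs_mean[OF assms])
  finally show ?thesis .
qed

lemma clip_bias_scalar:
  assumes "\<delta> \<ge> 0" "0 < lam" "lam \<le> 1" "\<bar>x\<bar> \<le> M" "lam * M \<le> ((2::real) ^ (b - 1) - 1) * \<delta>"
  shows "(clipq \<delta> b x - x)\<^sup>2 \<le> (if x < - ((2::real) ^ (b - 1)) * \<delta> \<or> x > ((2::real) ^ (b - 1) - 1) * \<delta>
            then ((1 - lam) * M)\<^sup>2 else 0)"
proof -
  have pw: "(1::real) \<le> 2 ^ (b - 1)" by simp
  have M0: "0 \<le> M" using assms(4) by linarith
  have K: "((2::real) ^ (b - 1) - 1) * \<delta> \<le> (2::real) ^ (b - 1) * \<delta>" using assms(1) by (simp add: algebra_simps)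
  show ?thesis
  proof (cases "\<delta> = 0")
    case True
    then have "lam * M \<le> 0" using assms(5) by simp
    then have "M = 0" using M0 assms(2) by (simp add: mult_le_0_iff)
    then have "x = 0" using assms(4) by simp
    then show ?thesis using True by (simp add: clipq_def)
  next
    case False
    show ?thesis
    proof (cases "x < - ((2::real) ^ (b - 1)) * \<delta>")
      case True
      then have c: "clipq \<delta> b x = - ((2::real) ^ (b - 1)) * \<delta>" using False by (simp add: clipq_def)
      have "0 \<le> clipq \<delta> b x - x" using c True by simp
      moreover have "clipq \<delta> b x - x \<le> (1 - lam) * M" using c K assms(4,5) by (simp add: algebra_simps)
      ultimately have "(clipq \<delta> b x - x)\<^sup>2 \<le> ((1 - lam) * M)\<^sup>2" by (intro power_mono) auto
      then show ?thesis using True by simp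
    next
      case nlo: False
      show ?thesis
      proof (cases "x > ((2::real) ^ (b - 1) - 1) * \<delta>")
        case True
        then have c: "clipq \<delta> b x = ((2::real) ^ (b - 1) - 1) * \<delta>" using False nlo by (simp add: clipq_def)
        have "0 \<le> x - clipq \<delta> b x" using c True by simp
        moreover have "x - clipq \<delta> b x \<le> (1 - lam) * M" using c assms(4,5) by (simp add: algebra_simps)
        ultimately have "(x - clipq \<delta> b x)\<^sup>2 \<le> ((1 - lam) * M)\<^sup>2" by (intro power_mono) auto
        then show ?thesis using True by (simp add: power2_commute)
      next
        case False
        then show ?thesis using nlo \<open>\<delta> \<noteq> 0\<close> by (simp add: clipq_def)
      qed
    qed
  qed
qed

lemma inf_norm_ge: "\<bar>u $ j\<bar> \<le> inf_norm (u::real^'d)"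
  unfolding inf_norm_def by (rule Max_ge) auto

lemma inf_norm_le_norm: "inf_norm (u::real^'d) \<le> norm u"
proof -
  have "inf_norm u \<in> range (\<lambda>j. \<bar>u $ j\<bar>)" unfolding inf_norm_def by (rule Max_in) auto
  then obtain j where "inf_norm u = \<bar>u $ j\<bar>" by auto
  then show ?thesis by (simp add: component_le_norm_cart)
qed

lemma inf_norm_nonneg: "0 \<le> inf_norm (u::real^'d)"
  using inf_norm_ge[of u] by (meson abs_ge_zero order_trans)

lemma Qv_bias:
  fixes u :: "real^'d"
  assumes "\<delta> \<ge> 0" "0 < lam" "lam \<le> 1" "lam * inf_norm u \<le> ((2::real) ^ (b - 1) - 1) * \<delta>"
  shows "(norm (clipv \<delta> b u - u))\<^sup>2 \<le> real (n_out \<delta> b u) * ((1 - lam) * inf_norm u)\<^sup>2"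
proof -
  let ?P = "\<lambda>j. u$j < - ((2::real) ^ (b - 1)) * \<delta> \<or> u$j > ((2::real) ^ (b - 1) - 1) * \<delta>"
  have "(norm (clipv \<delta> b u - u))\<^sup>2 = (\<Sum>j\<in>UNIV. (clipq \<delta> b (u$j) - u$j)\<^sup>2)"
    by (simp add: nsq clipv_def)
  also have "\<dots> \<le> (\<Sum>j\<in>UNIV. if ?P j then ((1 - lam) * inf_norm u)\<^sup>2 else 0)"
    by (intro sum_mono clip_bias_scalar assms inf_norm_ge)
  also have "\<dots> = real (card {j. ?P j}) * ((1 - lam) * inf_norm u)\<^sup>2"
    by (simp add: sum.If_cases)
  finally show ?thesis by (simp add: n_out_def)
qed

lemma norm_sum_sq:
  fixes a :: "'i \<Rightarrow> 'b::real_normed_vector"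
  shows "(norm (\<Sum>i\<in>A. a i))\<^sup>2 \<le> real (card A) * (\<Sum>i\<in>A. (norm (a i))\<^sup>2)"
proof -
  have "(norm (\<Sum>i\<in>A. a i))\<^sup>2 \<le> (\<Sum>i\<in>A. norm (a i))\<^sup>2"
    by (intro power_mono norm_sum) auto
  also have "\<dots> \<le> (\<Sum>i\<in>A. (norm (a i))\<^sup>2) * card A"
    by (rule sum_squared_le_sum_of_squares)
  finally show ?thesis by (simp add: mult.commute)
qed

lemma Q_fin:
  fixes N :: nat
  shows "finite (set_pmf (Pi_pmf {..<N} 0 (\<lambda>i. Qv (\<delta>s i) b (us i))))"
  by (rule finite_Pi) (auto simp: Qv_fin)

lemma stageQ:
  fixes us :: "nat \<Rightarrow> real^'d"
  assumes dpos: "\<forall>i<N. \<delta>s i \<ge> 0"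
  shows "measure_pmf.expectation (Pi_pmf {..<N} 0 (\<lambda>i. Qv (\<delta>s i) b (us i))) (\<lambda>qs. (norm (avg N qs - avg N us))\<^sup>2)
       = (1 / real N)\<^sup>2 * ((\<Sum>i<N. measure_pmf.expectation (Qv (\<delta>s i) b (us i)) (\<lambda>q. (norm (q - clipv (\<delta>s i) b (us i)))\<^sup>2))
          + (norm (\<Sum>i<N. clipv (\<delta>s i) b (us i) - us i))\<^sup>2)"
proof -
  define m where "m i = clipv (\<delta>s i) b (us i)" for i
  define Q where "Q = Pi_pmf {..<N} 0 (\<lambda>i. Qv (\<delta>s i) b (us i))"
  define C where "C = (\<Sum>i<N. m i - us i)"
  have finQ: "finite (set_pmf Q)" unfolding Q_def by (rule Q_fin)
  have eq: "avg N qs - avg N us = (1 / real N) *\<^sub>R ((\<Sum>i<N. qs i - m i) + C)" for qs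
    unfolding avg_def C_def by (simp add: sum_subtractf scaleR_diff_right)
  have "measure_pmf.expectation Q (\<lambda>qs. (norm (avg N qs - avg N us))\<^sup>2)
     = measure_pmf.expectation Q (\<lambda>qs. (1 / real N)\<^sup>2 * ((norm (\<Sum>i<N. qs i - m i))\<^sup>2
          + 2 * ((\<Sum>i<N. qs i - m i) \<bullet> C) + (norm C)\<^sup>2))"
    unfolding eq by (simp only: norm_scaleR power_mult_distrib power2_abs norm_add_sq)
  also have "\<dots> = (1 / real N)\<^sup>2 * (measure_pmf.expectation Q (\<lambda>qs. (norm (\<Sum>i<N. qs i - m i))\<^sup>2)
          + 2 * measure_pmf.expectation Q (\<lambda>qs. (\<Sum>i<N. qs i - m i) \<bullet> C) + (norm C)\<^sup>2)"
    using finQ by (simp add: int_fin)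
  also have "measure_pmf.expectation Q (\<lambda>qs. (\<Sum>i<N. qs i - m i) \<bullet> C)
      = (\<Sum>i<N. measure_pmf.expectation Q (\<lambda>qs. (qs i - m i) \<bullet> C))"
    using finQ by (simp add: inner_sum_left int_fin)
  also have "\<dots> = (\<Sum>i<N. measure_pmf.expectation (Qv (\<delta>s i) b (us i)) (\<lambda>q. (q - m i) \<bullet> C))"
    unfolding Q_def by (intro sum.cong refl) (subst E_marg[where h="\<lambda>q. (q - m _) \<bullet> C"]; simp)
  also have "\<dots> = 0" unfolding m_def using dpos by (simp add: Qv_mean0)
  also have "measure_pmf.expectation Q (\<lambda>qs. (norm (\<Sum>i<N. qs i - m i))\<^sup>2)
      = (\<Sum>i<N. measure_pmf.expectation (Qv (\<delta>s i) b (us i)) (\<lambda>q. (norm (q - m i))\<^sup>2))"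
    unfolding Q_def
    by (rule var_sum_Pi[where F="\<lambda>i q. q"]) (use dpos in \<open>auto simp: Qv_fin m_def Qv_mean0\<close>)
  finally show ?thesis unfolding m_def C_def Q_def by simp
qed

lemma unif_ne: "(n::nat) \<ge> 1 \<Longrightarrow> {..<n} \<noteq> {}"
proof
  assume "n \<ge> 1" "{..<n} = {}"
  moreover have "0 \<in> {..<n}" using \<open>n \<ge> 1\<close> by simp
  ultimately show False by simp
qed

lemma unif_fin: "(n::nat) \<ge> 1 \<Longrightarrow> finite (set_pmf (pmf_of_set {..<n}))"
  by (subst set_pmf_of_set) (use unif_ne[of n] in auto)

lemma unif_E: "(n::nat) \<ge> 1 \<Longrightarrow> measure_pmf.expectation (pmf_of_set {..<n}) (h :: nat \<Rightarrow> real) = (\<Sum>k<n. h k) / real n"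
  by (subst integral_pmf_of_set) (use unif_ne[of n] in auto)

lemma unif_props:
  fixes g :: "nat \<Rightarrow> 'b::euclidean_space"
  assumes n: "n \<ge> 1" and mu: "\<mu> = (1 / real n) *\<^sub>R (\<Sum>k<n. g k)"
  shows "measure_pmf.expectation (pmf_of_set {..<n}) (\<lambda>k. (g k - \<mu>) \<bullet> c) = 0"
    and "measure_pmf.expectation (pmf_of_set {..<n}) (\<lambda>k. (norm (g k - \<mu>))\<^sup>2) \<le> (\<Sum>k<n. (norm (g k))\<^sup>2) / real n"
proof -
  have s: "(\<Sum>k<n. g k) = real n *\<^sub>R \<mu>" using n by (simp add: mu)
  show "measure_pmf.expectation (pmf_of_set {..<n}) (\<lambda>k. (g k - \<mu>) \<bullet> c) = 0"
    using n by (simp add: unif_E inner_diff_left sum_subtractf inner_sum_left[symmetric] s)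
  have "(\<Sum>k<n. (norm (g k - \<mu>))\<^sup>2) = (\<Sum>k<n. (norm (g k))\<^sup>2) - 2 * ((\<Sum>k<n. g k) \<bullet> \<mu>) + real n * (norm \<mu>)\<^sup>2"
    by (simp add: norm_add_sq[of _ "- \<mu>", simplified] sum.distrib sum_subtractf inner_sum_left sum_distrib_left)
  also have "\<dots> = (\<Sum>k<n. (norm (g k))\<^sup>2) - real n * (norm \<mu>)\<^sup>2"
    unfolding s by (simp add: power2_norm_eq_inner)
  also have "\<dots> \<le> (\<Sum>k<n. (norm (g k))\<^sup>2)" by simp
  finally show "measure_pmf.expectation (pmf_of_set {..<n}) (\<lambda>k. (norm (g k - \<mu>))\<^sup>2) \<le> (\<Sum>k<n. (norm (g k))\<^sup>2) / real n"
    using n by (simp add: unif_E divide_right_mono)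
qed

lemma samp_fin: "n \<ge> 1 \<Longrightarrow> finite (set_pmf (sample_pmf n B))"
  unfolding sample_pmf_def by (rule finite_Pi) (auto simp: unif_fin)

lemma samp_props:
  fixes g :: "nat \<Rightarrow> 'b::euclidean_space"
  assumes n: "n \<ge> 1" and B: "B \<ge> 1"
    and m0: "\<And>c. measure_pmf.expectation (pmf_of_set {..<n}) (\<lambda>k. (g k - \<mu>) \<bullet> c) = 0"
  shows "measure_pmf.expectation (sample_pmf n B) (\<lambda>I. ((1 / real B) *\<^sub>R (\<Sum>a<B. g (I a)) - \<mu>) \<bullet> c) = 0"
    and "measure_pmf.expectation (sample_pmf n B) (\<lambda>I. (norm ((1 / real B) *\<^sub>R (\<Sum>a<B. g (I a)) - \<mu>))\<^sup>2)
         = (1 / real B) * measure_pmf.expectation (pmf_of_set {..<n}) (\<lambda>k. (norm (g k - \<mu>))\<^sup>2)"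
proof -
  have eq: "(1 / real B) *\<^sub>R (\<Sum>a<B. g (I a)) - \<mu> = (1 / real B) *\<^sub>R (\<Sum>a<B. g (I a) - \<mu>)" for I
    using B by (simp add: sum_subtractf scaleR_diff_right sum_constant_scaleR)
  have fin: "finite (set_pmf (sample_pmf n B))" using n by (rule samp_fin)
  have "measure_pmf.expectation (sample_pmf n B) (\<lambda>I. ((1 / real B) *\<^sub>R (\<Sum>a<B. g (I a)) - \<mu>) \<bullet> c)
     = (1 / real B) * (\<Sum>a<B. measure_pmf.expectation (sample_pmf n B) (\<lambda>I. (g (I a) - \<mu>) \<bullet> c))"
    unfolding eq using fin by (simp add: inner_sum_left int_fin)
  also have "\<dots> = 0"
    unfolding sample_pmf_def using m0
    by (subst sum.cong[OF refl E_marg[where h="\<lambda>k. (g k - \<mu>) \<bullet> c"]]) auto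
  finally show "measure_pmf.expectation (sample_pmf n B) (\<lambda>I. ((1 / real B) *\<^sub>R (\<Sum>a<B. g (I a)) - \<mu>) \<bullet> c) = 0" .
  have "measure_pmf.expectation (sample_pmf n B) (\<lambda>I. (norm ((1 / real B) *\<^sub>R (\<Sum>a<B. g (I a)) - \<mu>))\<^sup>2)
     = (1 / real B)\<^sup>2 * measure_pmf.expectation (sample_pmf n B) (\<lambda>I. (norm (\<Sum>a<B. g (I a) - \<mu>))\<^sup>2)"
    unfolding eq by (simp only: norm_scaleR power_mult_distrib power2_abs) simp
  also have "measure_pmf.expectation (sample_pmf n B) (\<lambda>I. (norm (\<Sum>a<B. g (I a) - \<mu>))\<^sup>2)
     = (\<Sum>a<B. measure_pmf.expectation (pmf_of_set {..<n}) (\<lambda>k. (norm (g k - \<mu>))\<^sup>2))"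
    unfolding sample_pmf_def
    by (rule var_sum_Pi[where F="\<lambda>a. g" and \<mu>="\<lambda>_. \<mu>"]) (use n m0 in \<open>auto simp: unif_fin\<close>)
  finally show "measure_pmf.expectation (sample_pmf n B) (\<lambda>I. (norm ((1 / real B) *\<^sub>R (\<Sum>a<B. g (I a)) - \<mu>))\<^sup>2)
         = (1 / real B) * measure_pmf.expectation (pmf_of_set {..<n}) (\<lambda>k. (norm (g k - \<mu>))\<^sup>2)"
    using B by (simp add: power2_eq_square)
qed

lemma sampling_stage:
  fixes g :: "nat \<Rightarrow> 'b::euclidean_space"
  assumes n: "n \<ge> 1" and B: "B \<ge> 1" and N: "N \<ge> 1"
    and mu: "\<mu> = (1 / real n) *\<^sub>R (\<Sum>k<n. g k)"
    and gb: "(\<Sum>k<n. (norm (g k))\<^sup>2) / real n \<le> V"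
  shows "measure_pmf.expectation (Pi_pmf {..<N} d (\<lambda>_. sample_pmf n B))
           (\<lambda>Is. (norm ((1 / real N) *\<^sub>R (\<Sum>i<N. (1 / real B) *\<^sub>R (\<Sum>a<B. g (Is i a))) - \<mu>))\<^sup>2)
         \<le> V / (real N * real B)"
proof -
  let ?w = "\<lambda>I. (1 / real B) *\<^sub>R (\<Sum>a<B. g (I a))"
  have m0: "\<And>c. measure_pmf.expectation (pmf_of_set {..<n}) (\<lambda>k. (g k - \<mu>) \<bullet> c) = 0"
    using unif_props(1)[OF n mu] .
  have eq: "(1 / real N) *\<^sub>R (\<Sum>i<N. ?w (Is i)) - \<mu> = (1 / real N) *\<^sub>R (\<Sum>i<N. ?w (Is i) - \<mu>)" for Is
    using N by (simp add: sum_subtractf scaleR_diff_right sum_constant_scaleR)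
  have "measure_pmf.expectation (Pi_pmf {..<N} d (\<lambda>_. sample_pmf n B))
           (\<lambda>Is. (norm ((1 / real N) *\<^sub>R (\<Sum>i<N. ?w (Is i)) - \<mu>))\<^sup>2)
      = (1 / real N)\<^sup>2 * measure_pmf.expectation (Pi_pmf {..<N} d (\<lambda>_. sample_pmf n B))
           (\<lambda>Is. (norm (\<Sum>i<N. ?w (Is i) - \<mu>))\<^sup>2)"
    unfolding eq by (simp only: norm_scaleR power_mult_distrib power2_abs) simp
  also have "measure_pmf.expectation (Pi_pmf {..<N} d (\<lambda>_. sample_pmf n B))
           (\<lambda>Is. (norm (\<Sum>i<N. ?w (Is i) - \<mu>))\<^sup>2)
      = (\<Sum>i<N. measure_pmf.expectation (sample_pmf n B) (\<lambda>I. (norm (?w I - \<mu>))\<^sup>2))"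
    by (rule var_sum_Pi[where F="\<lambda>i. ?w" and \<mu>="\<lambda>_. \<mu>"])
       (use n B m0 samp_props(1)[OF n B m0] in \<open>auto simp: samp_fin\<close>)
  also have "\<dots> = real N * ((1 / real B) * measure_pmf.expectation (pmf_of_set {..<n}) (\<lambda>k. (norm (g k - \<mu>))\<^sup>2))"
    using samp_props(2)[OF n B m0] by simp
  also have "(1 / real N)\<^sup>2 * \<dots> \<le> (1 / real N)\<^sup>2 * (real N * ((1 / real B) * V))"
    using unif_props(2)[OF n mu] gb by (intro mult_left_mono) auto
  also have "\<dots> = V / (real N * real B)" using N by (simp add: power2_eq_square field_simps)
  finally show ?thesis .
qed

lemma E_mono:
  fixes f g :: "'a \<Rightarrow> real"
  assumes "finite (set_pmf p)" "\<And>x. x \<in> set_pmf p \<Longrightarrow> f x \<le> g x"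
  shows "measure_pmf.expectation p f \<le> measure_pmf.expectation p g"
  using assms by (intro integral_mono_AE AE_pmfI int_fin) auto

lemma clipq_in:
  assumes "\<delta> \<ge> 0" "- ((2::real) ^ (b - 1)) * \<delta> \<le> x" "x \<le> ((2::real) ^ (b - 1) - 1) * \<delta>"
  shows "clipq \<delta> b x = x"
proof (cases "\<delta> = 0")
  case True
  then show ?thesis using assms by (simp add: clipq_def)
next
  case False
  then show ?thesis using assms by (simp add: clipq_def)
qed

lemma Q_set:
  fixes N :: nat
  assumes "qs \<in> set_pmf (Pi_pmf {..<N} 0 (\<lambda>i. Qv (\<delta>s i) b (us i)))" "i < N"
  shows "qs i \<in> set_pmf (Qv (\<delta>s i) b (us i))"
  using assms by (auto simp: set_Pi_pmf PiE_dflt_def)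

lemma avg_range:
  fixes us :: "nat \<Rightarrow> real^'d"
  assumes N: "N \<ge> 1" and d: "\<delta> \<ge> 0"
    and qs: "qs \<in> set_pmf (Pi_pmf {..<N} 0 (\<lambda>i. Qv \<delta> b (us i)))"
  shows "- ((2::real) ^ (b - 1)) * \<delta> \<le> (avg N qs)$j \<and> (avg N qs)$j \<le> ((2::real) ^ (b - 1) - 1) * \<delta>"
proof -
  let ?lo = "- ((2::real) ^ (b - 1)) * \<delta>" and ?hi = "((2::real) ^ (b - 1) - 1) * \<delta>"
  have r: "?lo \<le> qs i $ j \<and> qs i $ j \<le> ?hi" if "i < N" for i
    using Qs_set[OF d Qv_set[OF Q_set[OF qs that]]] by blast
  have e: "(avg N qs)$j = (\<Sum>i<N. qs i $ j) / real N" unfolding avg_def by simp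
  have "(\<Sum>i<N. ?lo) \<le> (\<Sum>i<N. qs i $ j)" using r by (intro sum_mono) auto
  moreover have "(\<Sum>i<N. qs i $ j) \<le> (\<Sum>i<N. ?hi)" using r by (intro sum_mono) auto
  ultimately show ?thesis unfolding e using N by (simp add: field_simps)
qed

lemma clipv_avg:
  fixes us :: "nat \<Rightarrow> real^'d"
  assumes N: "N \<ge> 1" and d: "\<delta> \<ge> 0"
    and qs: "qs \<in> set_pmf (Pi_pmf {..<N} 0 (\<lambda>i. Qv \<delta> b (us i)))"
  shows "clipv \<delta> b (avg N qs) = avg N qs"
  unfolding clipv_def using avg_range[OF N d qs] clipq_in[OF d] by (simp add: vec_eq_iff)

lemma C_N1:
  fixes us :: "nat \<Rightarrow> real^'d"
  assumes d: "\<delta> \<ge> 0"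
    and qs: "qs \<in> set_pmf (Pi_pmf {..<1} 0 (\<lambda>i. Qv \<delta> b (us i)))"
  shows "measure_pmf.expectation (Qv \<delta> b (avg 1 qs)) (\<lambda>q. (norm (q - avg 1 qs))\<^sup>2) = 0"
proof -
  have a: "avg 1 qs = qs 0" by (simp add: avg_def)
  have each: "measure_pmf.expectation (Qs \<delta> b (qs 0 $ j)) (\<lambda>z. (z - qs 0 $ j)\<^sup>2) = 0" for j
  proof -
    have m: "qs 0 $ j \<in> set_pmf (Qs \<delta> b (us 0 $ j))" using Qv_set[OF Q_set[OF qs]] by simp
    from Qs_set[OF d m] obtain k where k: "qs 0 $ j = \<delta> * of_int k"
      and r: "- ((2::real) ^ (b - 1)) * \<delta> \<le> qs 0 $ j" "qs 0 $ j \<le> ((2::real) ^ (b - 1) - 1) * \<delta>" by blast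
    show ?thesis
    proof (cases "\<delta> = 0")
      case True
      then show ?thesis using k by (simp add: Qs_def)
    next
      case False
      then show ?thesis using Qs_grid[of \<delta> b k] r d unfolding k by simp
    qed
  qed
  show ?thesis unfolding a
    using QvE[where h="\<lambda>j z. (z - qs 0 $ j)\<^sup>2" and u="qs 0"] each by (simp add: nsq)
qed

lemma quant_core:
  fixes us :: "nat \<Rightarrow> real^'d"
  assumes N: "N \<ge> 1" and lam: "0 < lam" "lam \<le> 1"
    and h: "\<forall>i<N. 0 \<le> \<delta>s i \<and> \<delta>s i \<le> \<Delta> \<and> lam * inf_norm (us i) \<le> ((2::real) ^ (b - 1) - 1) * \<delta>s i
              \<and> inf_norm (us i) \<le> M \<and> real (n_out (\<delta>s i) b (us i)) \<le> d_lam"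
  shows "measure_pmf.expectation (Pi_pmf {..<N} 0 (\<lambda>i. Qv (\<delta>s i) b (us i))) (\<lambda>qs. (norm (avg N qs - avg N us))\<^sup>2)
       \<le> real CARD('d) * (\<Delta>\<^sup>2 / 4) / real N + d_lam * ((1 - lam) * M)\<^sup>2"
proof -
  let ?A = "real CARD('d) * (\<Delta>\<^sup>2 / 4)" and ?Bb = "d_lam * ((1 - lam) * M)\<^sup>2"
  have dpos: "\<forall>i<N. \<delta>s i \<ge> 0" using h by auto
  have v: "(\<Sum>i<N. measure_pmf.expectation (Qv (\<delta>s i) b (us i)) (\<lambda>q. (norm (q - clipv (\<delta>s i) b (us i)))\<^sup>2))
        \<le> (\<Sum>i<N. ?A)"
  proof (intro sum_mono)
    fix i assume "i \<in> {..<N}"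
    then have hi: "0 \<le> \<delta>s i" "\<delta>s i \<le> \<Delta>" using h by auto
    have "measure_pmf.expectation (Qv (\<delta>s i) b (us i)) (\<lambda>q. (norm (q - clipv (\<delta>s i) b (us i)))\<^sup>2)
        \<le> real CARD('d) * ((\<delta>s i)\<^sup>2 / 4)" by (rule Qv_var) (use hi in auto)
    also have "\<dots> \<le> ?A" using hi by (intro mult_left_mono divide_right_mono power_mono) auto
    finally show "measure_pmf.expectation (Qv (\<delta>s i) b (us i)) (\<lambda>q. (norm (q - clipv (\<delta>s i) b (us i)))\<^sup>2) \<le> ?A" .
  qed
  have bsum: "(\<Sum>i<N. (norm (clipv (\<delta>s i) b (us i) - us i))\<^sup>2) \<le> (\<Sum>i<N. ?Bb)"
  proof (intro sum_mono)
    fix i assume "i \<in> {..<N}"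
    then have hi: "0 \<le> \<delta>s i" "lam * inf_norm (us i) \<le> ((2::real) ^ (b - 1) - 1) * \<delta>s i"
       "inf_norm (us i) \<le> M" "real (n_out (\<delta>s i) b (us i)) \<le> d_lam" using h by auto
    have "(norm (clipv (\<delta>s i) b (us i) - us i))\<^sup>2 \<le> real (n_out (\<delta>s i) b (us i)) * ((1 - lam) * inf_norm (us i))\<^sup>2"
      by (rule Qv_bias) (use hi lam in auto)
    also have "\<dots> \<le> ?Bb"
      using hi lam inf_norm_nonneg[of "us i"]
      by (intro mult_mono power_mono mult_left_mono) auto
    finally show "(norm (clipv (\<delta>s i) b (us i) - us i))\<^sup>2 \<le> ?Bb" .
  qed
  have c: "(norm (\<Sum>i<N. clipv (\<delta>s i) b (us i) - us i))\<^sup>2 \<le> real N * (\<Sum>i<N. ?Bb)"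
    using norm_sum_sq[of "\<lambda>i. clipv (\<delta>s i) b (us i) - us i" "{..<N}"] bsum
    by (smt (verit, ccfv_SIG) card_lessThan mult_left_mono of_nat_0_le_iff)
  have "measure_pmf.expectation (Pi_pmf {..<N} 0 (\<lambda>i. Qv (\<delta>s i) b (us i))) (\<lambda>qs. (norm (avg N qs - avg N us))\<^sup>2)
      \<le> (1 / real N)\<^sup>2 * ((\<Sum>i<N. ?A) + real N * (\<Sum>i<N. ?Bb))"
    unfolding stageQ[OF dpos] using v c by (intro mult_left_mono) auto
  also have "\<dots> = ?A / real N + ?Bb" using N by (simp add: power2_eq_square field_simps)
  finally show ?thesis .
qed

lemma quant_C:
  fixes us :: "nat \<Rightarrow> real^'d"
  assumes N: "N \<ge> 1" and lam: "0 < lam" "lam \<le> 1"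
    and h: "\<forall>i<N. 0 \<le> \<delta> \<and> \<delta> \<le> \<Delta> \<and> lam * inf_norm (us i) \<le> ((2::real) ^ (b - 1) - 1) * \<delta>
              \<and> inf_norm (us i) \<le> M \<and> real (n_out \<delta> b (us i)) \<le> d_lam"
  shows "measure_pmf.expectation (Pi_pmf {..<N} 0 (\<lambda>i. Qv \<delta> b (us i)))
           (\<lambda>qs. measure_pmf.expectation (Qv \<delta> b (avg N qs)) (\<lambda>q. (norm (q - avg N us))\<^sup>2))
       \<le> 3 * real CARD('d) * \<Delta>\<^sup>2 / 8 + d_lam * ((1 - lam) * M)\<^sup>2"
proof -
  let ?Q = "Pi_pmf {..<N} 0 (\<lambda>i. Qv \<delta> b (us i))"
  let ?Vf = "if N = 1 then 0 else real CARD('d) * (\<Delta>\<^sup>2 / 4)"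
  have d: "0 \<le> \<delta>" "\<delta> \<le> \<Delta>" using h N by auto
  have finQ: "finite (set_pmf ?Q)" using Q_fin[of N "\<lambda>_. \<delta>" b us] by simp
  have pt: "measure_pmf.expectation (Qv \<delta> b (avg N qs)) (\<lambda>q. (norm (q - avg N us))\<^sup>2)
         \<le> ?Vf + (norm (avg N qs - avg N us))\<^sup>2" if qs: "qs \<in> set_pmf ?Q" for qs
  proof -
    have "measure_pmf.expectation (Qv \<delta> b (avg N qs)) (\<lambda>q. (norm (q - avg N us))\<^sup>2)
        = measure_pmf.expectation (Qv \<delta> b (avg N qs)) (\<lambda>q. (norm (q - avg N qs))\<^sup>2) + (norm (avg N qs - avg N us))\<^sup>2"
      using Qv_dec[OF d(1), of b "avg N qs" "avg N us"] clipv_avg[OF N d(1) qs] by simp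
    also have "measure_pmf.expectation (Qv \<delta> b (avg N qs)) (\<lambda>q. (norm (q - avg N qs))\<^sup>2) \<le> ?Vf"
    proof (cases "N = 1")
      case True
      then show ?thesis using C_N1[OF d(1), of qs b us] qs by simp
    next
      case False
      have "measure_pmf.expectation (Qv \<delta> b (avg N qs)) (\<lambda>q. (norm (q - avg N qs))\<^sup>2) \<le> real CARD('d) * (\<delta>\<^sup>2 / 4)"
        using Qv_var[OF d(1), of b "avg N qs"] clipv_avg[OF N d(1) qs] by simp
      also have "\<dots> \<le> real CARD('d) * (\<Delta>\<^sup>2 / 4)" using d by (intro mult_left_mono divide_right_mono power_mono) auto
      finally show ?thesis using False by simp
    qed
    finally show ?thesis by simp
  qed
  have "measure_pmf.expectation ?Q (\<lambda>qs. measure_pmf.expectation (Qv \<delta> b (avg N qs)) (\<lambda>q. (norm (q - avg N us))\<^sup>2))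
      \<le> measure_pmf.expectation ?Q (\<lambda>qs. ?Vf + (norm (avg N qs - avg N us))\<^sup>2)"
    by (rule E_mono[OF finQ pt])
  also have "\<dots> = ?Vf + measure_pmf.expectation ?Q (\<lambda>qs. (norm (avg N qs - avg N us))\<^sup>2)"
    using finQ by (simp add: int_fin)
  also have "\<dots> \<le> ?Vf + (real CARD('d) * (\<Delta>\<^sup>2 / 4) / real N + d_lam * ((1 - lam) * M)\<^sup>2)"
    using quant_core[OF N lam, of "\<lambda>_. \<delta>" \<Delta> us b M d_lam] h by simp
  also have "\<dots> \<le> 3 * real CARD('d) * \<Delta>\<^sup>2 / 8 + d_lam * ((1 - lam) * M)\<^sup>2"
  proof (cases "N = 1")
    case True
    then show ?thesis by simp
  next
    case False
    then have "real N \<ge> 2" using N by linarith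
    then have "real CARD('d) * (\<Delta>\<^sup>2 / 4) / real N \<le> real CARD('d) * (\<Delta>\<^sup>2 / 4) / 2"
      by (intro divide_left_mono) auto
    then show ?thesis using False by simp
  qed
  finally show ?thesis .
qed

lemma sq_split: "(norm (a + c :: 'b::real_inner))\<^sup>2 \<le> 2 * (norm a)\<^sup>2 + 2 * (norm c)\<^sup>2"
proof -
  have "0 \<le> (norm (a - c))\<^sup>2" by simp
  moreover have "(norm (a - c))\<^sup>2 = (norm a)\<^sup>2 - 2 * (a \<bullet> c) + (norm c)\<^sup>2"
    by (simp add: power2_norm_eq_inner inner_diff_left inner_diff_right inner_commute)
  ultimately show ?thesis by (simp add: norm_add_sq)
qed

lemma P_fin: "n \<ge> 1 \<Longrightarrow> finite (set_pmf (Pi_pmf {..<(N::nat)} d (\<lambda>_. sample_pmf n B)))"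
  by (rule finite_Pi) (auto simp: samp_fin)

lemma P_set:
  assumes "Is \<in> set_pmf (Pi_pmf {..<(N::nat)} d (\<lambda>_. sample_pmf n B))" "i < N" "a < B" "n \<ge> 1"
  shows "Is i a < n"
proof -
  have "Is i \<in> set_pmf (sample_pmf n B)" using assms(1,2) by (auto simp: set_Pi_pmf PiE_dflt_def)
  then have "Is i a \<in> set_pmf (pmf_of_set {..<n})" using assms(3)
    unfolding sample_pmf_def by (auto simp: set_Pi_pmf PiE_dflt_def)
  then show ?thesis using unif_ne[OF assms(4)] by (subst (asm) set_pmf_of_set) auto
qed

lemma F_fin: "finite (set_pmf (if c then Qv \<delta> b y else return_pmf y))"
  by (auto simp: Qv_fin)

lemma step_bound:
  fixes G :: "nat \<Rightarrow> real^'d \<Rightarrow> real^'d" and x xt :: "real^'d"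
  assumes n: "n \<ge> 1" and N: "N \<ge> 1" and B: "B \<ge> 1" and b: "b \<ge> 2"
    and lam: "0 < lam" "lam \<le> 1"
    and lip: "\<forall>i<n. \<forall>x y. norm (G i x - G i y) \<le> L * norm (x - y)"
    and dl: "\<forall>(us, v) \<in> set_pmf (step G n N B b lam sch x xt).
                  \<forall>i<N. real (n_out (scale sch lam b N us i) b (us i)) \<le> d_lam"
  shows "measure_pmf.expectation (step G n N B b lam sch x xt) (\<lambda>(us, v). (norm (v - gradF G n x))\<^sup>2)
     \<le> 2 * ((if sch = SchC then 3 * real CARD('d) * (lam * (L * norm (x - xt)) / ((2::real) ^ (b - 1) - 1))\<^sup>2 / 8
              else real CARD('d) * ((lam * (L * norm (x - xt)) / ((2::real) ^ (b - 1) - 1))\<^sup>2 / 4))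
           + d_lam * ((1 - lam) * (L * norm (x - xt)))\<^sup>2)
       + 2 * ((L * norm (x - xt))\<^sup>2 / (real N * real B))"
proof -
  define K where "K = (2::real) ^ (b - 1) - 1"
  define R where "R = L * norm (x - xt)"
  define \<Delta> where "\<Delta> = lam * R / K"
  define Tq where "Tq = (if sch = SchC then 3 * real CARD('d) * \<Delta>\<^sup>2 / 8 else real CARD('d) * (\<Delta>\<^sup>2 / 4))"
  define Bb where "Bb = d_lam * ((1 - lam) * R)\<^sup>2"
  define g where "g k = G k x - G k xt" for k
  define D where "D = gradF G n x - gradF G n xt"
  define P where "P = Pi_pmf {..<N} (\<lambda>_. 0) (\<lambda>_. sample_pmf n B)"
  define usf where "usf Is = (\<lambda>i. if i < N then worker_u G B (Is i) x xt else 0)" for Is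
  define Q :: "(nat \<Rightarrow> real^'d) \<Rightarrow> (nat \<Rightarrow> real^'d) pmf" where "Q us = Pi_pmf {..<N} 0 (\<lambda>i. Qv (scale sch lam b N us i) b (us i))" for us
  define F :: "(nat \<Rightarrow> real^'d) \<Rightarrow> (nat \<Rightarrow> real^'d) \<Rightarrow> (real^'d) pmf" where "F us qs = (if sch = SchC then Qv (delta_max lam b N us) b (avg N qs) else return_pmf (avg N qs))" for us qs
  have K1: "K \<ge> 1"
  proof -
    have "(2::real) ^ 1 \<le> 2 ^ (b - 1)" using b by (intro power_increasing) auto
    then show ?thesis unfolding K_def by simp
  qed
  have gR: "norm (g k) \<le> R" if "k < n" for k using lip that unfolding g_def R_def by auto
  have R0: "R \<ge> 0" using gR[of 0] n by (meson norm_ge_zero order_trans less_le_trans zero_less_one le_less_trans)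
  have finP: "finite (set_pmf P)" unfolding P_def using n by (rule P_fin)
  have stepeq: "step G n N B b lam sch x xt =
      bind_pmf P (\<lambda>Is. bind_pmf (Q (usf Is)) (\<lambda>qs. bind_pmf (F (usf Is) qs) (\<lambda>ut. return_pmf (usf Is, ut + gradF G n xt))))"
    unfolding step_def P_def Q_def F_def usf_def Let_def by simp
  have E1: "measure_pmf.expectation (step G n N B b lam sch x xt) (\<lambda>(us, v). (norm (v - gradF G n x))\<^sup>2)
     = measure_pmf.expectation P (\<lambda>Is. measure_pmf.expectation (Q (usf Is)) (\<lambda>qs.
          measure_pmf.expectation (F (usf Is) qs) (\<lambda>ut. (norm (ut + gradF G n xt - gradF G n x))\<^sup>2)))"
    unfolding stepeq using finP
    by (simp add: E_bind Q_def Q_fin F_def F_fin)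
  have avgeq: "avg N (usf Is) = (1 / real N) *\<^sub>R (\<Sum>i<N. (1 / real B) *\<^sub>R (\<Sum>a<B. g (Is i a)))" for Is
    unfolding avg_def usf_def worker_u_def g_def by simp
  have Deq: "D = (1 / real n) *\<^sub>R (\<Sum>k<n. g k)"
    unfolding D_def gradF_def g_def by (simp add: sum_subtractf scaleR_diff_right)
  have samp: "measure_pmf.expectation P (\<lambda>Is. (norm (avg N (usf Is) - D))\<^sup>2) \<le> R\<^sup>2 / (real N * real B)"
  proof -
    have "(\<Sum>k<n. (norm (g k))\<^sup>2) \<le> (\<Sum>k<n. R\<^sup>2)"
      using gR by (intro sum_mono power_mono) auto
    then have gb: "(\<Sum>k<n. (norm (g k))\<^sup>2) / real n \<le> R\<^sup>2" using n by (simp add: field_simps)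
    show ?thesis unfolding avgeq P_def by (rule sampling_stage[OF n B N Deq gb])
  qed
  have QB: "measure_pmf.expectation (Q (usf Is)) (\<lambda>qs. measure_pmf.expectation (F (usf Is) qs)
               (\<lambda>ut. (norm (ut - avg N (usf Is)))\<^sup>2)) \<le> Tq + Bb" if Is: "Is \<in> set_pmf P" for Is
  proof -
    define us where "us = usf Is"
    have wn: "inf_norm (us i) \<le> R" if i: "i < N" for i
    proof -
      have "norm (us i) = norm ((1 / real B) *\<^sub>R (\<Sum>a<B. g (Is i a)))"
        unfolding us_def usf_def worker_u_def g_def using i by simp
      also have "\<dots> \<le> (1 / real B) * (\<Sum>a<B. norm (g (Is i a)))"
        using norm_sum[of "\<lambda>a. g (Is i a)" "{..<B}"] by (simp add: divide_right_mono)
      also have "\<dots> \<le> (1 / real B) * (\<Sum>a<B. R)"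
        using gR P_set[OF Is[unfolded P_def] i _ n] by (intro mult_left_mono sum_mono) auto
      also have "\<dots> = R" using B by simp
      finally show ?thesis using inf_norm_le_norm[of "us i"] by linarith
    qed
    have mem: "real (n_out (scale sch lam b N us i) b (us i)) \<le> d_lam" if i: "i < N" for i
    proof -
      obtain qs0 where qs0: "qs0 \<in> set_pmf (Q us)" using set_pmf_not_empty[of "Q us"] by blast
      obtain ut0 where ut0: "ut0 \<in> set_pmf (F us qs0)" using set_pmf_not_empty[of "F us qs0"] by blast
      have m1: "(us, ut0 + gradF G n xt) \<in> set_pmf (bind_pmf (F us qs0) (\<lambda>ut. return_pmf (us, ut + gradF G n xt)))"
        using ut0 unfolding set_bind_pmf by simp
      have m2: "(us, ut0 + gradF G n xt) \<in> set_pmf (bind_pmf (Q us) (\<lambda>qs. bind_pmf (F us qs) (\<lambda>ut. return_pmf (us, ut + gradF G n xt))))"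
        using m1 qs0 unfolding set_bind_pmf[of "Q us"] by blast
      have "(us, ut0 + gradF G n xt) \<in> set_pmf (step G n N B b lam sch x xt)"
        using m2 Is unfolding stepeq set_bind_pmf[of P] us_def by blast
      then show ?thesis using dl i by auto
    qed
    define di where "di i = delta_i lam b (us i)" for i
    define dm where "dm = delta_max lam b N us"
    have di_eq: "di i = lam * inf_norm (us i) / K" for i unfolding di_def delta_i_def K_def by simp
    have di0: "0 \<le> di i" for i unfolding di_eq using lam K1 inf_norm_nonneg[of "us i"] by simp
    have diD: "di i \<le> \<Delta>" if "i < N" for i
      unfolding di_eq \<Delta>_def using lam K1 wn[OF that] by (intro divide_right_mono mult_left_mono) auto
    have diK: "lam * inf_norm (us i) \<le> K * di i" for i unfolding di_eq using K1 by simp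
    have dm_eq: "dm = Max (di ` {..<N})" unfolding dm_def delta_max_def di_def by simp
    have ne: "{..<N} \<noteq> {}" using unif_ne[OF N] .
    have dm_ge: "di i \<le> dm" if "i < N" for i unfolding dm_eq using that by (intro Max_ge) auto
    have dmD: "dm \<le> \<Delta>" unfolding dm_eq using ne diD by (subst Max_le_iff) auto
    have dm0: "0 \<le> dm" using dm_ge[of 0] di0[of 0] N by linarith
    have sc: "scale sch lam b N us i = (if sch = SchA then di i else dm)" for i
      unfolding scale_def di_def dm_def by simp
    have sch_facts: "0 \<le> scale sch lam b N us i \<and> scale sch lam b N us i \<le> \<Delta>
       \<and> lam * inf_norm (us i) \<le> ((2::real) ^ (b - 1) - 1) * scale sch lam b N us i" if i: "i < N" for i
    proof -
      have "K * di i \<le> K * dm" using dm_ge[OF i] K1 by (intro mult_left_mono) auto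
      then show ?thesis unfolding sc using di0 diD[OF i] dm0 dmD diK[of i] unfolding K_def by auto
    qed
    show ?thesis
    proof (cases "sch = SchC")
      case True
      have Qe: "Q us = Pi_pmf {..<N} 0 (\<lambda>i. Qv dm b (us i))" unfolding Q_def sc using True by simp
      have Fe: "F us qs = Qv dm b (avg N qs)" for qs unfolding F_def dm_def using True by simp
      have "measure_pmf.expectation (Q us) (\<lambda>qs. measure_pmf.expectation (F us qs) (\<lambda>ut. (norm (ut - avg N us))\<^sup>2))
          \<le> 3 * real CARD('d) * \<Delta>\<^sup>2 / 8 + d_lam * ((1 - lam) * R)\<^sup>2"
        unfolding Qe Fe
      proof (rule quant_C[OF N lam])
        show "\<forall>i<N. 0 \<le> dm \<and> dm \<le> \<Delta> \<and> lam * inf_norm (us i) \<le> ((2::real) ^ (b - 1) - 1) * dm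
              \<and> inf_norm (us i) \<le> R \<and> real (n_out dm b (us i)) \<le> d_lam"
        proof (intro allI impI)
          fix i assume i: "i < N"
          have e: "scale sch lam b N us i = dm" using sc[of i] True by simp
          show "0 \<le> dm \<and> dm \<le> \<Delta> \<and> lam * inf_norm (us i) \<le> ((2::real) ^ (b - 1) - 1) * dm
              \<and> inf_norm (us i) \<le> R \<and> real (n_out dm b (us i)) \<le> d_lam"
            using sch_facts[OF i] wn[OF i] mem[OF i] unfolding e by blast
        qed
      qed
      then show ?thesis unfolding us_def Tq_def Bb_def using True by simp
    next
      case False
      have Fe: "F us qs = return_pmf (avg N qs)" for qs unfolding F_def using False by simp
      have "measure_pmf.expectation (Q us) (\<lambda>qs. measure_pmf.expectation (F us qs) (\<lambda>ut. (norm (ut - avg N us))\<^sup>2))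
          \<le> real CARD('d) * (\<Delta>\<^sup>2 / 4) / real N + d_lam * ((1 - lam) * R)\<^sup>2"
        unfolding Fe Q_def expectation_return_pmf
      proof (rule quant_core[OF N lam])
        show "\<forall>i<N. 0 \<le> scale sch lam b N us i \<and> scale sch lam b N us i \<le> \<Delta>
             \<and> lam * inf_norm (us i) \<le> ((2::real) ^ (b - 1) - 1) * scale sch lam b N us i
             \<and> inf_norm (us i) \<le> R \<and> real (n_out (scale sch lam b N us i) b (us i)) \<le> d_lam"
          using sch_facts wn mem by blast
      qed
      also have "real CARD('d) * (\<Delta>\<^sup>2 / 4) / real N \<le> real CARD('d) * (\<Delta>\<^sup>2 / 4) / 1"
        using N by (intro divide_left_mono) auto
      finally show ?thesis unfolding us_def Tq_def Bb_def using False by simp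
    qed
  qed
  have comb: "measure_pmf.expectation (Q (usf Is)) (\<lambda>qs.
          measure_pmf.expectation (F (usf Is) qs) (\<lambda>ut. (norm (ut + gradF G n xt - gradF G n x))\<^sup>2))
      \<le> 2 * (Tq + Bb) + 2 * (norm (avg N (usf Is) - D))\<^sup>2" if Is: "Is \<in> set_pmf P" for Is
  proof -
    let ?u = "avg N (usf Is)"
    have finQ: "finite (set_pmf (Q (usf Is)))" unfolding Q_def by (rule Q_fin)
    have finF: "finite (set_pmf (F (usf Is) qs))" for qs unfolding F_def by (rule F_fin)
    have pw: "(norm (ut + gradF G n xt - gradF G n x))\<^sup>2 \<le> 2 * (norm (ut - ?u))\<^sup>2 + 2 * (norm (?u - D))\<^sup>2" for ut
    proof -
      have "ut + gradF G n xt - gradF G n x = (ut - ?u) + (?u - D)" unfolding D_def by (simp add: algebra_simps)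
      then show ?thesis using sq_split[of "ut - ?u" "?u - D"] by (simp only:)
    qed
    have "measure_pmf.expectation (Q (usf Is)) (\<lambda>qs.
          measure_pmf.expectation (F (usf Is) qs) (\<lambda>ut. (norm (ut + gradF G n xt - gradF G n x))\<^sup>2))
       \<le> measure_pmf.expectation (Q (usf Is)) (\<lambda>qs.
          measure_pmf.expectation (F (usf Is) qs) (\<lambda>ut. 2 * (norm (ut - ?u))\<^sup>2 + 2 * (norm (?u - D))\<^sup>2))"
      by (intro E_mono finQ finF pw)
    also have "\<dots> = 2 * measure_pmf.expectation (Q (usf Is)) (\<lambda>qs.
          measure_pmf.expectation (F (usf Is) qs) (\<lambda>ut. (norm (ut - ?u))\<^sup>2)) + 2 * (norm (?u - D))\<^sup>2"
      using finQ finF by (simp add: int_fin)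
    also have "\<dots> \<le> 2 * (Tq + Bb) + 2 * (norm (?u - D))\<^sup>2" using QB[OF Is] by simp
    finally show ?thesis .
  qed
  have "measure_pmf.expectation (step G n N B b lam sch x xt) (\<lambda>(us, v). (norm (v - gradF G n x))\<^sup>2)
      \<le> measure_pmf.expectation P (\<lambda>Is. 2 * (Tq + Bb) + 2 * (norm (avg N (usf Is) - D))\<^sup>2)"
    unfolding E1 by (intro E_mono finP comb)
  also have "\<dots> = 2 * (Tq + Bb) + 2 * measure_pmf.expectation P (\<lambda>Is. (norm (avg N (usf Is) - D))\<^sup>2)"
    using finP by (simp add: int_fin)
  also have "\<dots> \<le> 2 * (Tq + Bb) + 2 * (R\<^sup>2 / (real N * real B))" using samp by simp
  finally show ?thesis unfolding Tq_def Bb_def \<Delta>_def K_def R_def by simp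
qed

lemma fin_bind: "finite (set_pmf p) \<Longrightarrow> (\<And>x. x \<in> set_pmf p \<Longrightarrow> finite (set_pmf (f x))) \<Longrightarrow> finite (set_pmf (bind_pmf p f))"
  by simp

lemma step_fin: "n \<ge> 1 \<Longrightarrow> finite (set_pmf (step G n N B b lam sch x xt))"
  unfolding step_def Let_def
  by (intro fin_bind P_fin Q_fin F_fin) (auto simp: Qv_fin)

lemma inner_fin: "n \<ge> 1 \<Longrightarrow> finite (set_pmf (inner G n N B b lam sch h eta xt t))"
  by (induction t) (auto intro!: fin_bind simp: step_fin)

lemma snap_fin: "n \<ge> 1 \<Longrightarrow> finite (set_pmf (snap G n N B b lam sch h eta m x0 s))"
  by (induction s) (auto intro!: fin_bind simp: inner_fin)

theorem lemma2:
  fixes fs :: "nat \<Rightarrow> real ^ 'd \<Rightarrow> real"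
    and G :: "nat \<Rightarrow> real ^ 'd \<Rightarrow> real ^ 'd"
    and h :: "real ^ 'd \<Rightarrow> ereal"
    and n N B S m b s t :: nat
    and L eta lam d_lam :: real
    and x0 :: "real ^ 'd"
    and sch :: scheme
  assumes n_pos: "n \<ge> 1" and N_pos: "N \<ge> 1" and B_pos: "B \<ge> 1"
    and grad: "\<forall>i<n. \<forall>x. (fs i has_derivative (\<lambda>y. G i x \<bullet> y)) (at x)"
    and lip: "\<forall>i<n. \<forall>x y. norm (G i x - G i y) \<le> L * norm (x - y)"
    and h_proper: "proper_fun h" and h_convex: "convex_ereal h" and h_lsc: "lsc_fun h"
    and eta_pos: "eta > 0"
    and lam: "0 < lam" "lam \<le> 1"
    and b: "b \<ge> 2"
    and s: "s < S" and t: "t < m"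
    and d_lam_nonneg: "d_lam \<ge> 0"
    and d_lam: "\<forall>(xt, x, us, v) \<in> set_pmf (joint G n N B b lam sch h eta m x0 s t).
                  \<forall>i<N. real (n_out (scale sch lam b N us i) b (us i)) \<le> d_lam"
  shows
    "(sch = SchA \<or> sch = SchB \<longrightarrow>
       measure_pmf.expectation (joint G n N B b lam sch h eta m x0 s t)
         (\<lambda>(xt, x, us, v). (norm (v - gradF G n x))\<^sup>2)
       \<le> 2 * L\<^sup>2 * (real CARD('d) * lam\<^sup>2 / (4 * ((2::real) ^ (b - 1) - 1)\<^sup>2)
                     + d_lam * (1 - lam)\<^sup>2 + 1 / (real N * real B))
         * measure_pmf.expectation (joint G n N B b lam sch h eta m x0 s t)
             (\<lambda>(xt, x, us, v). (norm (x - xt))\<^sup>2))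
     \<and> (sch = SchC \<longrightarrow>
       measure_pmf.expectation (joint G n N B b lam sch h eta m x0 s t)
         (\<lambda>(xt, x, us, v). (norm (v - gradF G n x))\<^sup>2)
       \<le> 2 * L\<^sup>2 * (3 * real CARD('d) * lam\<^sup>2 / (8 * ((2::real) ^ (b - 1) - 1)\<^sup>2)
                     + d_lam * (1 - lam)\<^sup>2 + 1 / (real N * real B))
         * measure_pmf.expectation (joint G n N B b lam sch h eta m x0 s t)
             (\<lambda>(xt, x, us, v). (norm (x - xt))\<^sup>2))"
proof -
  let ?SN = "snap G n N B b lam sch h eta m x0 s"
  let ?IN = "\<lambda>xt. inner G n N B b lam sch h eta xt t"
  let ?ST = "\<lambda>x xt. step G n N B b lam sch x xt"
  let ?J = "joint G n N B b lam sch h eta m x0 s t"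
  define K where "K = (2::real) ^ (b - 1) - 1"
  have K1: "K \<ge> 1"
  proof -
    have "(2::real) ^ 1 \<le> 2 ^ (b - 1)" using b by (intro power_increasing) auto
    then show ?thesis unfolding K_def by simp
  qed
  define C where "C = 2 * L\<^sup>2 * ((if sch = SchC then 3 * real CARD('d) * lam\<^sup>2 / (8 * K\<^sup>2)
                       else real CARD('d) * lam\<^sup>2 / (4 * K\<^sup>2)) + d_lam * (1 - lam)\<^sup>2 + 1 / (real N * real B))"
  have finS: "finite (set_pmf ?SN)" using n_pos by (rule snap_fin)
  have finI: "finite (set_pmf (?IN xt))" for xt using n_pos by (rule inner_fin)
  have finT: "finite (set_pmf (?ST x xt))" for x xt using n_pos by (rule step_fin)
  have Jeq: "measure_pmf.expectation ?J H = measure_pmf.expectation ?SN (\<lambda>xt. measure_pmf.expectation (?IN xt)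
      (\<lambda>x. measure_pmf.expectation (?ST x xt) (\<lambda>(us, v). H (xt, x, us, v))))" for H :: "_ \<Rightarrow> real"
    unfolding joint_def using finS finI finT
    by (simp add: E_bind case_prod_unfold)
  have pt: "measure_pmf.expectation (?ST x xt) (\<lambda>(us, v). (norm (v - gradF G n x))\<^sup>2) \<le> C * (norm (x - xt))\<^sup>2"
    if xt: "xt \<in> set_pmf ?SN" and x: "x \<in> set_pmf (?IN xt)" for x xt
  proof -
    have dl: "\<forall>(us, v) \<in> set_pmf (?ST x xt). \<forall>i<N. real (n_out (scale sch lam b N us i) b (us i)) \<le> d_lam"
    proof (intro ballI)
      fix p assume p: "p \<in> set_pmf (?ST x xt)"
      obtain us v where pe: "p = (us, v)" by (cases p)
      have "(xt, x, us, v) \<in> set_pmf ?J" unfolding joint_def using xt x p pe by force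
      then show "case p of (us, v) \<Rightarrow> \<forall>i<N. real (n_out (scale sch lam b N us i) b (us i)) \<le> d_lam"
        using d_lam pe by blast
    qed
    have "measure_pmf.expectation (?ST x xt) (\<lambda>(us, v). (norm (v - gradF G n x))\<^sup>2)
     \<le> 2 * ((if sch = SchC then 3 * real CARD('d) * (lam * (L * norm (x - xt)) / ((2::real) ^ (b - 1) - 1))\<^sup>2 / 8
              else real CARD('d) * ((lam * (L * norm (x - xt)) / ((2::real) ^ (b - 1) - 1))\<^sup>2 / 4))
           + d_lam * ((1 - lam) * (L * norm (x - xt)))\<^sup>2)
       + 2 * ((L * norm (x - xt))\<^sup>2 / (real N * real B))"
      by (rule step_bound[OF n_pos N_pos B_pos b lam lip dl])
    also have "\<dots> = C * (norm (x - xt))\<^sup>2"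
      unfolding C_def K_def[symmetric] using K1
      by (simp add: power_mult_distrib power_divide field_simps) (simp add: power2_eq_square algebra_simps)
    finally show ?thesis .
  qed
  have main: "measure_pmf.expectation ?J (\<lambda>(xt, x, us, v). (norm (v - gradF G n x))\<^sup>2)
      \<le> C * measure_pmf.expectation ?J (\<lambda>(xt, x, us, v). (norm (x - xt))\<^sup>2)"
  proof -
    have "measure_pmf.expectation ?J (\<lambda>(xt, x, us, v). (norm (v - gradF G n x))\<^sup>2)
       = measure_pmf.expectation ?SN (\<lambda>xt. measure_pmf.expectation (?IN xt)
           (\<lambda>x. measure_pmf.expectation (?ST x xt) (\<lambda>(us, v). (norm (v - gradF G n x))\<^sup>2)))"
      by (subst Jeq) (simp add: case_prod_unfold)
    also have "\<dots> \<le> measure_pmf.expectation ?SN (\<lambda>xt. measure_pmf.expectation (?IN xt)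
           (\<lambda>x. C * (norm (x - xt))\<^sup>2))"
      by (intro E_mono finS finI pt)
    also have "\<dots> = C * measure_pmf.expectation ?SN (\<lambda>xt. measure_pmf.expectation (?IN xt)
           (\<lambda>x. (norm (x - xt))\<^sup>2))"
      using finS finI by (simp add: int_fin)
    also have "measure_pmf.expectation ?SN (\<lambda>xt. measure_pmf.expectation (?IN xt) (\<lambda>x. (norm (x - xt))\<^sup>2))
       = measure_pmf.expectation ?J (\<lambda>(xt, x, us, v). (norm (x - xt))\<^sup>2)"
      by (subst Jeq) (simp add: case_prod_unfold finT)
    finally show ?thesis .
  qed
  show ?thesis using main unfolding C_def K_def by auto
qed

end
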